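(* Let $n$ be a positive integer. A UC-move is realized by a sequence of $V^{n}$-moves and welded Reidemeister moves if and only if $n=1$.
   Context: A virtual link diagram is the image of an immersion of finitely many ordered, oriented circles in the plane with transverse double points, each a classical crossing (with over/under information) or a virtual crossing. Welded Reidemeister moves are R1–R3, the virtual moves VR1–VR3 (Reidemeister moves with only virtual crossings) and VR4 (a strand with only virtual crossings slides past a classical crossing), and the OC move (a strand passing over two other strands at classical crossings, those two strands crossing each other virtually, may be slid across that virtual crossing). The UC move is the same as OC with "over" replaced by "under". The $V^{n}$-move: inside a disk the diagram consists of two arcs $a,b$ oriented in the same direction; on one side they are parallel without crossings; on the other side the tangle is the $2$-braid word $(\sigma\tau)^{n}$, where $\sigma$ is a classical crossing with $b$ over $a$ and $\tau$ a virtual crossing (so $n$ classical crossings, all with $b$ over and of the same sign, alternating with $n$ virtual crossings). The move replaces one side by the other. (The $V^{1}$-move is equivalent to crossing virtualization, which replaces a classical crossing by a virtual one.) *)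

theory Defs
  imports Main "HOL-Library.Multiset"
begin

text \<open>
  A virtual link diagram modulo planar isotopy and the virtual moves VR1--VR4
  is the same thing as its Gauss diagram: ordered oriented circles (components),
  each carrying a cyclic word of arrow endpoints.  Each classical crossing is an
  arrow from its over-crossing point (tail) to its under-crossing point (head),
  carrying the sign of the crossing.  Virtual crossings are not recorded.

  A letter is (arrow label, endpoint type, sign), sign True = positive.
  A diagram is a list of components (ordered); each component is a linear word
  read as a cyclic word (rotation is one of the equivalence steps below).
\<close>

datatype endp = Tl | Hd

type_synonym letter = "nat \<times> endp \<times> bool"
type_synonym gauss = "letter list list"

definition wf_gauss :: "gauss \<Rightarrow> bool" where
  "wf_gauss D \<longleftrightarrow> (\<forall>l. let occ = filter (\<lambda>c. fst c = l) (concat D) in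
      occ = [] \<or> (\<exists>s. mset occ = {#(l, Tl, s), (l, Hd, s)#}))"

text \<open>Templates: the diagram outside finitely many disjoint small disks, where the
  i-th disk-segment is a hole \<open>Inr i\<close> in some component.\<close>
type_synonym template = "(letter + nat) list list"

definition fill :: "template \<Rightarrow> (nat \<Rightarrow> letter list) \<Rightarrow> gauss" where
  "fill T f = map (\<lambda>c. concat (map (\<lambda>a. case a of Inl x \<Rightarrow> [x] | Inr i \<Rightarrow> f i) c)) T"

definition holes :: "template \<Rightarrow> nat list" where
  "holes T = [projr a. a \<leftarrow> concat T, \<not> isl a]"

definition is_template :: "template \<Rightarrow> nat \<Rightarrow> bool" where
  "is_template T k \<longleftrightarrow> mset (holes T) = mset [0..<k]"

definition local_move :: "nat \<Rightarrow> ((nat \<Rightarrow> letter list) \<Rightarrow> (nat \<Rightarrow> letter list) \<Rightarrow> bool)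
    \<Rightarrow> gauss \<Rightarrow> gauss \<Rightarrow> bool" where
  "local_move k M D D' \<longleftrightarrow> wf_gauss D \<and> wf_gauss D' \<and>
     (\<exists>T f g. is_template T k \<and> D = fill T f \<and> D' = fill T g \<and> (M f g \<or> M g f))"

definition R1_pic :: "(nat \<Rightarrow> letter list) \<Rightarrow> (nat \<Rightarrow> letter list) \<Rightarrow> bool" where
  "R1_pic f g \<longleftrightarrow> f 0 = [] \<and>
     (\<exists>x s. g 0 = [(x, Tl, s), (x, Hd, s)] \<or> g 0 = [(x, Hd, s), (x, Tl, s)])"

definition R2_pic :: "(nat \<Rightarrow> letter list) \<Rightarrow> (nat \<Rightarrow> letter list) \<Rightarrow> bool" where
  "R2_pic f g \<longleftrightarrow> f 0 = [] \<and> f 1 = [] \<and>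
     (\<exists>x y s. (g 0 = [(x, Tl, s), (y, Tl, \<not> s)] \<or> g 0 = [(y, Tl, \<not> s), (x, Tl, s)]) \<and>
              (g 1 = [(x, Hd, s), (y, Hd, \<not> s)] \<or> g 1 = [(y, Hd, \<not> s), (x, Hd, s)]))"

text \<open>R3: strands top (segment 0), middle (segment 1), bottom (segment 2); arrows
  x: top to middle (sign a), y: top to bottom (sign b), z: middle to bottom
  (sign c).  With lam = side of the move (True = +1), the endpoint orders are
  determined by: on each segment the first-listed arrow comes first iff
  lam * (product of the two signs) = -1.  The move flips lam (all orders
  reversed).  These are exactly the 8 oriented Reidemeister III moves.\<close>
definition r3_side :: "bool \<Rightarrow> nat \<Rightarrow> nat \<Rightarrow> nat \<Rightarrow> bool \<Rightarrow> bool \<Rightarrow> bool \<Rightarrow> nat \<Rightarrow> letter list" where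
  "r3_side lam x y z a b c i =
     (if i = 0 then (let w = [(x, Tl, a), (y, Tl, b)] in if \<not> (lam \<longleftrightarrow> (a \<longleftrightarrow> b)) then w else rev w)
      else if i = 1 then (let w = [(x, Hd, a), (z, Tl, c)] in if \<not> (lam \<longleftrightarrow> (a \<longleftrightarrow> c)) then w else rev w)
      else if i = 2 then (let w = [(y, Hd, b), (z, Hd, c)] in if \<not> (lam \<longleftrightarrow> (b \<longleftrightarrow> c)) then w else rev w)
      else [])"

definition R3_pic :: "(nat \<Rightarrow> letter list) \<Rightarrow> (nat \<Rightarrow> letter list) \<Rightarrow> bool" where
  "R3_pic f g \<longleftrightarrow> (\<exists>lam x y z a b c. (\<forall>i<3. f i = r3_side lam x y z a b c i \<and>
                                               g i = r3_side (\<not> lam) x y z a b c i))"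

definition OC_pic :: "(nat \<Rightarrow> letter list) \<Rightarrow> (nat \<Rightarrow> letter list) \<Rightarrow> bool" where
  "OC_pic f g \<longleftrightarrow> (\<exists>x y s t. f 0 = [(x, Tl, s), (y, Tl, t)] \<and> g 0 = [(y, Tl, t), (x, Tl, s)])"

definition UC_pic :: "(nat \<Rightarrow> letter list) \<Rightarrow> (nat \<Rightarrow> letter list) \<Rightarrow> bool" where
  "UC_pic f g \<longleftrightarrow> (\<exists>x y s t. f 0 = [(x, Hd, s), (y, Hd, t)] \<and> g 0 = [(y, Hd, t), (x, Hd, s)])"

definition Vn_pic :: "nat \<Rightarrow> (nat \<Rightarrow> letter list) \<Rightarrow> (nat \<Rightarrow> letter list) \<Rightarrow> bool" where
  "Vn_pic n f g \<longleftrightarrow> f 0 = [] \<and> f 1 = [] \<and>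
     (\<exists>xs s. length xs = n \<and> distinct xs \<and>
        g 0 = map (\<lambda>x. (x, Tl, s)) xs \<and> g 1 = map (\<lambda>x. (x, Hd, s)) xs)"

definition iso_step :: "gauss \<Rightarrow> gauss \<Rightarrow> bool" where
  "iso_step D D' \<longleftrightarrow> wf_gauss D \<and>
     ((\<exists>i < length D. D' = D[i := rotate1 (D ! i)]) \<or>
      (\<exists>\<pi>. inj \<pi> \<and> D' = map (map (\<lambda>(l, e, s). (\<pi> l, e, s))) D))"

definition welded_step :: "gauss \<Rightarrow> gauss \<Rightarrow> bool" where
  "welded_step D D' \<longleftrightarrow> iso_step D D' \<or> iso_step D' D \<or>
     local_move 1 R1_pic D D' \<or> local_move 2 R2_pic D D' \<or>
     local_move 3 R3_pic D D' \<or> local_move 1 OC_pic D D'"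

definition Vn_step :: "nat \<Rightarrow> gauss \<Rightarrow> gauss \<Rightarrow> bool" where
  "Vn_step n = local_move 2 (Vn_pic n)"

definition UC_step :: "gauss \<Rightarrow> gauss \<Rightarrow> bool" where
  "UC_step = local_move 1 UC_pic"

end

theory Submission
  imports Defs
begin


definition piece :: "(nat \<Rightarrow> letter list) \<Rightarrow> letter + nat \<Rightarrow> letter list" where
  "piece f a = (case a of Inl x \<Rightarrow> [x] | Inr i \<Rightarrow> f i)"

lemma piece_simps[simp]: "piece f (Inl x) = [x]" "piece f (Inr i) = f i"
  by (simp_all add: piece_def)

lemma fill_piece: "fill T f = map (\<lambda>c. concat (map (piece f) c)) T"
  unfolding fill_def piece_def by simp

lemma length_fill[simp]: "length (fill T f) = length T"
  by (simp add: fill_def)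

lemma nth_fill: "j < length T \<Longrightarrow> fill T f ! j = concat (map (piece f) (T!j))"
  by (simp add: fill_piece)

definition inls :: "(letter + nat) list \<Rightarrow> letter list" where
  "inls t = concat (map (\<lambda>a. case a of Inl x \<Rightarrow> [x] | Inr _ \<Rightarrow> []) t)"

definition hl :: "(letter + nat) list \<Rightarrow> nat list" where
  "hl t = [projr a. a \<leftarrow> t, \<not> isl a]"

lemma hl_simps[simp]: "hl [] = []" "hl (Inl x # t) = hl t" "hl (Inr i # t) = i # hl t"
  "hl (t @ u) = hl t @ hl u"
  by (auto simp: hl_def)

lemma inls_simps[simp]: "inls [] = []" "inls (Inl x # t) = x # inls t" "inls (Inr i # t) = inls t"
  "inls (t @ u) = inls t @ inls u"
  by (auto simp: inls_def)

lemma hl_concat: "hl (concat T) = concat (map hl T)"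
  by (induction T) auto

lemma holes_hl: "holes T = hl (concat T)"
  by (simp add: holes_def hl_def)

lemma concat_fill: "concat (fill T f) = concat (map (piece f) (concat T))"
  by (induction T) (auto simp: fill_piece)

lemma filter_concat_piece:
  "length (filter P (concat (map (piece f) t))) =
     length (filter P (inls t)) + sum_list (map (\<lambda>i. length (filter P (f i))) (hl t))"
proof (induction t)
  case Nil then show ?case by simp
next
  case (Cons a t) then show ?case by (cases a) auto
qed

lemma sum_list_perm:
  fixes F :: "'a \<Rightarrow> 'b::comm_monoid_add"
  assumes "mset xs = mset ys" shows "sum_list (map F xs) = sum_list (map F ys)"
proof -
  have "sum_list (map F xs) = sum_mset (mset (map F xs))" by (simp only: sum_mset_sum_list)
  also have "\<dots> = sum_mset (mset (map F ys))" using assms by (simp only: mset_map)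
  also have "\<dots> = sum_list (map F ys)" by (simp only: sum_mset_sum_list)
  finally show ?thesis .
qed

lemma filter_fill:
  assumes "is_template T k"
  shows "length (filter P (concat (fill T f))) =
     length (filter P (inls (concat T))) + sum_list (map (\<lambda>i. length (filter P (f i))) [0..<k])"
  using assms unfolding is_template_def
  by (simp add: concat_fill filter_concat_piece holes_hl sum_list_perm)

lemma set_holes: "is_template T k \<Longrightarrow> set (holes T) = {0..<k}"
  unfolding is_template_def by (metis set_mset_mset set_upt)

lemma hl_mem: "Inr i \<in> set t \<Longrightarrow> i \<in> set (hl t)"
proof (induction t)
  case Nil then show ?case by simp
next
  case (Cons a t) then show ?case by (cases a) auto
qed

lemma hole_lt: "is_template T k \<Longrightarrow> j < length T \<Longrightarrow> Inr i \<in> set (T!j) \<Longrightarrow> i < k"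
proof -
  assume a: "is_template T k" "j < length T" "Inr i \<in> set (T!j)"
  have "i \<in> set (hl (T!j))" using a(3) by (rule hl_mem)
  moreover have "hl (T!j) \<in> set (map hl T)" using a(2) by simp
  ultimately have "i \<in> set (concat (map hl T))" unfolding set_concat by blast
  then have "i \<in> set (holes T)" by (simp add: holes_hl hl_concat)
  then show "i < k" using set_holes[OF a(1)] by auto
qed

lemma wf_occ: "wf_gauss D \<Longrightarrow> filter (\<lambda>c. fst c = l) (concat D) = [] \<or>
   (\<exists>s. mset (filter (\<lambda>c. fst c = l) (concat D)) = {#(l, Tl, s), (l, Hd, s)#})"
  by (simp add: wf_gauss_def Let_def)

lemma wf_le1:
  assumes "wf_gauss D"
  shows "length (filter (\<lambda>c. fst c = l \<and> fst (snd c) = e) (concat D)) \<le> 1"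
proof -
  from wf_occ[OF assms, of l] show ?thesis
  proof
    assume "filter (\<lambda>c. fst c = l) (concat D) = []" then show ?thesis by (simp add: filter_empty_conv)
  next
    assume "\<exists>s. mset (filter (\<lambda>c. fst c = l) (concat D)) = {#(l, Tl, s), (l, Hd, s)#}"
    then obtain s where s: "mset (filter (\<lambda>c. fst c = l) (concat D)) = {#(l, Tl, s), (l, Hd, s)#}" by blast
    have "length (filter (\<lambda>c. fst (snd c) = e) (filter (\<lambda>c. fst c = l) (concat D)))
        = size (filter_mset (\<lambda>c. fst (snd c) = e) (mset (filter (\<lambda>c. fst c = l) (concat D))))"
      by (simp only: size_mset[symmetric] mset_filter)
    also have "\<dots> \<le> 1" unfolding s by (cases e) auto
    finally show ?thesis by simp
  qed
qed

lemma wf_partner: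
  assumes "wf_gauss D" "(l, e, s) \<in> set (concat D)"
  shows "(l, e', s) \<in> set (concat D)"
proof -
  have ne: "filter (\<lambda>c. fst c = l) (concat D) \<noteq> []"
  proof
    assume "filter (\<lambda>c. fst c = l) (concat D) = []"
    then have "(l, e, s) \<notin> set (concat D)" by (fastforce simp: filter_empty_conv)
    then show False using assms(2) by simp
  qed
  then obtain s' where s: "mset (filter (\<lambda>c. fst c = l) (concat D)) = {#(l, Tl, s'), (l, Hd, s')#}"
    using wf_occ[OF assms(1), of l] by blast
  have "(l,e,s) \<in># mset (filter (\<lambda>c. fst c = l) (concat D))" using assms(2) by simp
  then have "s = s'" unfolding s by (cases e) auto
  have "(l,e',s') \<in># mset (filter (\<lambda>c. fst c = l) (concat D))" unfolding s by (cases e') auto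
  then show ?thesis using \<open>s = s'\<close> by simp
qed

definition RR :: "nat \<Rightarrow> gauss \<Rightarrow> gauss \<Rightarrow> bool" where
  "RR n = (\<lambda>E E'. welded_step E E' \<or> Vn_step n E E')"

lemma del_step:
  assumes wf: "wf_gauss D" and mem: "(l, Tl, s) \<in> set (concat D)"
  defines "D1 \<equiv> map (filter (\<lambda>c. fst c \<noteq> l)) D"
  shows "Vn_step 1 D D1 \<and> Vn_step 1 D1 D \<and> wf_gauss D1 \<and> length D1 = length D
     \<and> length (concat D1) < length (concat D)"
proof -
  define F :: "letter \<Rightarrow> letter + nat" where
    "F = (\<lambda>c. if fst c = l then Inr (if fst (snd c) = Tl then 0 else 1) else Inl c)"
  define T where "T = map (map F) D"
  define f0 :: "nat \<Rightarrow> letter list" where "f0 = (\<lambda>_. [])"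
  define g :: "nat \<Rightarrow> letter list" where "g = (\<lambda>i. if i = 0 then [(l, Tl, s)] else [(l, Hd, s)])"
  have memH: "(l, Hd, s) \<in> set (concat D)" using wf_partner[OF wf mem] .
  have ne: "filter (\<lambda>c. fst c = l) (concat D) \<noteq> []"
  proof
    assume "filter (\<lambda>c. fst c = l) (concat D) = []"
    then have "(l, Tl, s) \<notin> set (concat D)" by (fastforce simp: filter_empty_conv)
    then show False using mem by simp
  qed
  then obtain s' where s': "mset (filter (\<lambda>c. fst c = l) (concat D)) = {#(l, Tl, s'), (l, Hd, s')#}"
    using wf_occ[OF wf, of l] by blast
  have "(l,Tl,s) \<in># mset (filter (\<lambda>c. fst c = l) (concat D))" using mem by simp
  then have ss: "s' = s" unfolding s' by auto
  have lab: "c \<in> set (concat D) \<Longrightarrow> fst c = l \<Longrightarrow> c = (l, Tl, s) \<or> c = (l, Hd, s)" for c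
  proof -
    assume "c \<in> set (concat D)" "fst c = l"
    then have "c \<in># mset (filter (\<lambda>c. fst c = l) (concat D))" by simp
    then show ?thesis unfolding s' ss by auto
  qed
  have fillg: "fill T g = D"
  proof -
    have "concat (map (piece g) (map F c)) = c" if "set c \<subseteq> set (concat D)" for c
      using that
    proof (induction c)
      case Nil then show ?case by simp
    next
      case (Cons a c)
      have am: "a \<in> set (concat D)" using Cons.prems by auto
      have "piece g (F a) = [a]"
      proof (cases "fst a = l")
        case True
        then have "a = (l, Tl, s) \<or> a = (l, Hd, s)" using lab[OF am] by blast
        then show ?thesis by (elim disjE) (simp_all add: F_def g_def)
      next
        case False then show ?thesis by (simp add: F_def)
      qed
      with Cons show ?case by simp
    qed
    then show ?thesis unfolding fill_piece T_def map_map o_def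
      by (intro map_idI) (auto simp del: map_map)
  qed
  have fillf: "fill T f0 = D1"
  proof -
    have "concat (map (piece f0) (map F c)) = filter (\<lambda>c. fst c \<noteq> l) c" for c
      by (induction c) (auto simp: F_def f0_def)
    then show ?thesis unfolding fill_piece T_def D1_def by simp
  qed
  have tmpl: "is_template T 2"
  proof -
    have "concat T = map F (concat D)" unfolding T_def by (simp add: map_concat)
    moreover have "hl (map F xs) = map (\<lambda>c. if fst (snd c) = Tl then 0 else 1) (filter (\<lambda>c. fst c = l) xs)" for xs
      by (induction xs) (auto simp: F_def)
    ultimately have "holes T = map (\<lambda>c. if fst (snd c) = Tl then 0 else 1) (filter (\<lambda>c. fst c = l) (concat D))"
      unfolding holes_hl by simp
    then have "mset (holes T) = image_mset (\<lambda>c. if fst (snd c) = Tl then 0 else (1::nat)) {#(l, Tl, s'), (l, Hd, s')#}"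
      by (simp add: s'[symmetric])
    then show ?thesis unfolding is_template_def by (simp add: numeral_2_eq_2)
  qed
  have pic: "Vn_pic 1 f0 g"
    unfolding Vn_pic_def f0_def g_def by (auto intro!: exI[of _ "[l]"])
  have wf1: "wf_gauss D1"
  proof -
    have cc: "concat D1 = filter (\<lambda>c. fst c \<noteq> l) (concat D)" unfolding D1_def
      by (induction D) auto
    show ?thesis unfolding wf_gauss_def Let_def
    proof
      fix l'
      show "filter (\<lambda>c. fst c = l') (concat D1) = [] \<or>
           (\<exists>s. mset (filter (\<lambda>c. fst c = l') (concat D1)) = {#(l', Tl, s), (l', Hd, s)#})"
      proof (cases "l' = l")
        case True then show ?thesis unfolding cc by (simp add: filter_filter)
      next
        case False
        then have "filter (\<lambda>c. fst c = l') (concat D1) = filter (\<lambda>c. fst c = l') (concat D)"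
          unfolding cc filter_filter using False by (intro filter_cong) auto
        then show ?thesis using wf_occ[OF wf, of l'] by simp
      qed
    qed
  qed
  have lenlt: "length (concat D1) < length (concat D)"
  proof -
    have cc: "concat D1 = filter (\<lambda>c. fst c \<noteq> l) (concat D)" unfolding D1_def
      by (induction D) auto
    show ?thesis unfolding cc using length_filter_less[OF mem, of "\<lambda>c. fst c \<noteq> l"] by simp
  qed
  have "Vn_step 1 D D1" unfolding Vn_step_def local_move_def
    apply (intro conjI wf wf1)
    apply (rule exI[of _ T], rule exI[of _ g], rule exI[of _ f0])
    using tmpl fillg fillf pic by auto
  moreover have "Vn_step 1 D1 D" unfolding Vn_step_def local_move_def
    apply (intro conjI wf wf1)
    apply (rule exI[of _ T], rule exI[of _ f0], rule exI[of _ g])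
    using tmpl fillg fillf pic by auto
  ultimately show ?thesis using wf1 lenlt by (simp add: D1_def)
qed

lemma repl_nil: "\<forall>x\<in>set D. x = [] \<Longrightarrow> D = replicate (length D) []"
  by (induction D) auto

lemma reduce:
  "wf_gauss D \<Longrightarrow> (RR 1)\<^sup>*\<^sup>* D (replicate (length D) []) \<and> (RR 1)\<^sup>*\<^sup>* (replicate (length D) []) D"
proof (induction "length (concat D)" arbitrary: D rule: less_induct)
  case less
  show ?case
  proof (cases "concat D = []")
    case True
    then have e: "replicate (length D) [] = D" by (intro repl_nil[symmetric]) simp
    show ?thesis unfolding e by (blast intro: rtranclp.rtrancl_refl)
  next
    case False
    then obtain c cs where "concat D = c # cs" by (cases "concat D") auto
    then have c: "c \<in> set (concat D)" by simp
    obtain l e s where "c = (l, e, s)" by (cases c) auto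
    then have mem: "(l, Tl, s) \<in> set (concat D)" using wf_partner[OF less.prems] c by blast
    define D1 where "D1 = map (filter (\<lambda>c. fst c \<noteq> l)) D"
    have st: "Vn_step 1 D D1 \<and> Vn_step 1 D1 D \<and> wf_gauss D1 \<and> length D1 = length D
     \<and> length (concat D1) < length (concat D)"
      using del_step[OF less.prems mem] unfolding D1_def by blast
    have h1: "length (concat D1) < length (concat D)" using st by blast
    have h2: "wf_gauss D1" using st by blast
    have h3: "length D1 = length D" using st by blast
    have IH: "(RR 1)\<^sup>*\<^sup>* D1 (replicate (length D1) []) \<and> (RR 1)\<^sup>*\<^sup>* (replicate (length D1) []) D1"
      using less.hyps[OF h1 h2] .
    have r1: "RR 1 D D1" "RR 1 D1 D" using st unfolding RR_def by blast+
    have a1: "(RR 1)\<^sup>*\<^sup>* D1 (replicate (length D) [])" using IH h3 by simp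
    have a2: "(RR 1)\<^sup>*\<^sup>* (replicate (length D) []) D1" using IH h3 by simp
    have "(RR 1)\<^sup>*\<^sup>* D (replicate (length D) [])"
      by (rule converse_rtranclp_into_rtranclp[of "RR 1" D D1, OF r1(1) a1])
    moreover have "(RR 1)\<^sup>*\<^sup>* (replicate (length D) []) D"
      by (rule rtranclp.rtrancl_into_rtrancl[of "RR 1" _ D1 D, OF a2 r1(2)])
    ultimately show ?thesis by blast
  qed
qed

lemma n1_dir: "UC_step D D' \<Longrightarrow> (RR 1)\<^sup>*\<^sup>* D D'"
proof -
  assume "UC_step D D'"
  then obtain T f g where w: "wf_gauss D" "wf_gauss D'" "D = fill T f" "D' = fill T g"
    unfolding UC_step_def local_move_def by blast
  then have len: "length D' = length D" by simp
  have a: "(RR 1)\<^sup>*\<^sup>* D (replicate (length D) [])" using reduce[OF w(1)] by blast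
  have b: "(RR 1)\<^sup>*\<^sup>* (replicate (length D) []) D'" using reduce[OF w(2)] len by simp
  show ?thesis by (rule rtranclp_trans[OF a b])
qed


definition inc :: "gauss \<Rightarrow> nat \<Rightarrow> nat \<Rightarrow> endp \<Rightarrow> bool" where
  "inc D j l e \<longleftrightarrow> (\<exists>s. (l, e, s) \<in> set (D ! j))"

definition sg :: "bool \<Rightarrow> int" where "sg s = (if s then 1 else -1)"

definition hw :: "gauss \<Rightarrow> nat \<Rightarrow> letter \<Rightarrow> int" where
  "hw D j c = (if j = 0 then (if fst (snd c) = Hd \<and> inc D (Suc 0) (fst c) Tl then sg (snd (snd c)) else 0)
               else (if fst (snd c) = Tl \<and> inc D 0 (fst c) Hd then sg (snd (snd c)) else 0))"

definition gw :: "gauss \<Rightarrow> nat \<Rightarrow> letter \<Rightarrow> int" where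
  "gw D j c = (if j = 0 then (if fst (snd c) = Tl \<and> inc D 0 (fst c) Hd then sg (snd (snd c))
                  else if fst (snd c) = Hd \<and> inc D 0 (fst c) Tl then - sg (snd (snd c)) else 0)
               else (if fst (snd c) = Hd \<and> inc D 0 (fst c) Tl then sg (snd (snd c)) else 0))"

fun psum :: "('a \<Rightarrow> int) \<Rightarrow> ('a \<Rightarrow> int) \<Rightarrow> 'a list \<Rightarrow> int" where
  "psum h g [] = 0"
| "psum h g (x # xs) = h x * sum_list (map g xs) + psum h g xs"

definition Inv :: "gauss \<Rightarrow> int" where
  "Inv D = psum (hw D 0) (gw D 0) (D!0) + psum (hw D (Suc 0)) (gw D (Suc 0)) (D!Suc 0)"

definition PP :: "nat \<Rightarrow> gauss \<Rightarrow> bool" where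
  "PP n D \<longleftrightarrow> length D = 2 \<and>
     (\<forall>j<2. int n dvd sum_list (map (hw D j) (D!j)) \<and> int n dvd sum_list (map (gw D j) (D!j))) \<and>
     int n dvd Inv D"

lemma all2: "(\<forall>j<(2::nat). P j) \<longleftrightarrow> P 0 \<and> P (Suc 0)"
  using less_2_cases by auto

lemma psum_append:
  "psum h g (xs @ ys) = psum h g xs + psum h g ys + sum_list (map h xs) * sum_list (map g ys)"
  by (induction xs) (auto simp: algebra_simps)

lemma dvd_prod_diff:
  fixes m :: int
  assumes "m dvd (a' - a)" "m dvd (b' - b)"
  shows "m dvd (a' * b' - a * b)"
proof -
  have "a' * b' - a * b = a' * (b' - b) + (a' - a) * b" by (simp add: algebra_simps)
  then show ?thesis using assms by simp
qed

lemma dvd_diff_iff: "(m::int) dvd (a' - a) \<Longrightarrow> (m dvd a' \<longleftrightarrow> m dvd a)"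
  by (metis dvd_add_right_iff diff_add_cancel)

lemma sums_concat_cong:
  fixes m :: int
  assumes "\<forall>a\<in>set t. m dvd (sum_list (map h' (q a)) - sum_list (map h (p a)))"
  shows "m dvd (sum_list (map h' (concat (map q t))) - sum_list (map h (concat (map p t))))"
  using assms
proof (induction t)
  case Nil then show ?case by simp
next
  case (Cons a t)
  have e: "sum_list (map h' (concat (map q (a#t)))) - sum_list (map h (concat (map p (a#t)))) =
     (sum_list (map h' (q a)) - sum_list (map h (p a))) +
     (sum_list (map h' (concat (map q t))) - sum_list (map h (concat (map p t))))" by simp
  show ?case unfolding e using Cons by (intro dvd_add) auto
qed

lemma psum_concat_cong:
  fixes m :: int
  assumes "\<forall>a\<in>set t. m dvd (sum_list (map h' (q a)) - sum_list (map h (p a))) \<and>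
                     m dvd (sum_list (map g' (q a)) - sum_list (map g (p a)))"
  shows "m dvd (psum h' g' (concat (map q t)) - psum h g (concat (map p t))
                 - sum_list (map (\<lambda>a. psum h' g' (q a) - psum h g (p a)) t))"
  using assms
proof (induction t)
  case Nil then show ?case by simp
next
  case (Cons a t)
  define A' where "A' = sum_list (map h' (q a))"
  define A where "A = sum_list (map h (p a))"
  define G' where "G' = sum_list (map g' (concat (map q t)))"
  define G where "G = sum_list (map g (concat (map p t)))"
  have e: "psum h' g' (concat (map q (a#t))) - psum h g (concat (map p (a#t)))
                 - sum_list (map (\<lambda>a. psum h' g' (q a) - psum h g (p a)) (a#t)) =
     (psum h' g' (concat (map q t)) - psum h g (concat (map p t))
                 - sum_list (map (\<lambda>a. psum h' g' (q a) - psum h g (p a)) t)) + (A' * G' - A * G)"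
    by (simp add: psum_append A'_def A_def G'_def G_def algebra_simps)
  have d1: "m dvd (A' - A)" using Cons.prems by (simp add: A'_def A_def)
  have d2: "m dvd (G' - G)" unfolding G'_def G_def
    using Cons.prems by (intro sums_concat_cong) auto
  show ?case unfolding e using Cons dvd_prod_diff[OF d1 d2] by (intro dvd_add) auto
qed

definition cT :: "template \<Rightarrow> nat \<Rightarrow> nat" where
  "cT T i = (if Inr i \<in> set (T!0) then 0 else 1)"

lemma T2: "length T = 2 \<Longrightarrow> T = [T!0, T!1]"
  by (cases T; cases "tl T") (auto simp: numeral_2_eq_2)

lemma hl_mem2: "i \<in> set (hl t) \<Longrightarrow> Inr i \<in> set t"
proof (induction t)
  case Nil then show ?case by simp
next
  case (Cons a t) then show ?case by (cases a) auto
qed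

lemma holes2: "length T = 2 \<Longrightarrow> holes T = hl (T!0) @ hl (T!1)"
  by (subst T2) (auto simp: holes_hl)

lemma distinct_holes: "is_template T k \<Longrightarrow> distinct (holes T)"
  unfolding is_template_def using mset_eq_imp_distinct_iff distinct_upt by blast

lemma cT_eq:
  assumes "is_template T k" "length T = 2" "Inr i \<in> set (T!j)" "j < 2"
  shows "cT T i = j"
proof (cases "j = 0")
  case True then show ?thesis using assms by (simp add: cT_def)
next
  case False
  then have j1: "j = 1" using assms(4) by simp
  have "Inr i \<notin> set (T!0)"
  proof
    assume "Inr i \<in> set (T!0)"
    then have "i \<in> set (hl (T!0))" by (rule hl_mem)
    moreover have "i \<in> set (hl (T!1))" using assms(3) j1 hl_mem by simp
    ultimately show False using distinct_holes[OF assms(1)] holes2[OF assms(2)] by auto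
  qed
  then show ?thesis by (simp add: cT_def j1)
qed

lemma cT_ex:
  assumes "is_template T k" "length T = 2" "i < k"
  shows "cT T i < 2 \<and> Inr i \<in> set (T ! cT T i)"
proof -
  have "i \<in> set (holes T)" using set_holes[OF assms(1)] assms(3) by simp
  then have "Inr i \<in> set (T!0) \<or> Inr i \<in> set (T!1)"
    using holes2[OF assms(2)] hl_mem2 by auto
  then show ?thesis by (auto simp: cT_def)
qed

lemma sum_hl:
  assumes "\<forall>a\<in>set t. \<Delta> a = (case a of Inl _ \<Rightarrow> 0 | Inr i \<Rightarrow> \<delta> i)"
  shows "sum_list (map \<Delta> t) = (sum_list (map \<delta> (hl t)) :: int)"
  using assms
proof (induction t)
  case Nil then show ?case by simp
next
  case (Cons a t) then show ?case by (cases a) auto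
qed

lemma sum_holes:
  fixes \<Delta> :: "nat \<Rightarrow> letter + nat \<Rightarrow> int"
  assumes "is_template T k" "length T = 2"
    "\<forall>j<2. \<forall>a\<in>set (T!j). \<Delta> j a = (case a of Inl _ \<Rightarrow> 0 | Inr i \<Rightarrow> \<delta> i)"
  shows "sum_list (map (\<Delta> 0) (T!0)) + sum_list (map (\<Delta> (Suc 0)) (T!Suc 0)) = sum_list (map \<delta> [0..<k])"
proof -
  have "sum_list (map (\<Delta> 0) (T!0)) + sum_list (map (\<Delta> (Suc 0)) (T!Suc 0))
      = sum_list (map \<delta> (hl (T!0))) + sum_list (map \<delta> (hl (T!Suc 0)))"
  proof -
    have "sum_list (map (\<Delta> 0) (T!0)) = sum_list (map \<delta> (hl (T!0)))"
      using assms(3) by (intro sum_hl) simp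
    moreover have "sum_list (map (\<Delta> (Suc 0)) (T!Suc 0)) = sum_list (map \<delta> (hl (T!Suc 0)))"
      using assms(3) by (intro sum_hl) simp
    ultimately show ?thesis by simp
  qed
  also have "\<dots> = sum_list (map \<delta> (holes T))" using holes2[OF assms(2)] by simp
  also have "\<dots> = sum_list (map \<delta> [0..<k])"
    using assms(1) unfolding is_template_def by (rule sum_list_perm)
  finally show ?thesis .
qed

lemma inls_mem: "Inl c \<in> set t \<Longrightarrow> c \<in> set (inls t)"
proof (induction t)
  case Nil then show ?case by simp
next
  case (Cons a t) then show ?case by (cases a) auto
qed

lemma inc_agree:
  assumes "is_template T k" "j < length T"
    "\<forall>i<k. \<forall>e s. (l, e, s) \<in> set (f i) \<longleftrightarrow> (l, e, s) \<in> set (g i)"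
  shows "inc (fill T f) j l e \<longleftrightarrow> inc (fill T g) j l e"
proof -
  have pc: "(l, e, s) \<in> set (piece f a) \<longleftrightarrow> (l, e, s) \<in> set (piece g a)" if "a \<in> set (T!j)" for a s
  proof (cases a)
    case (Inl x) then show ?thesis by simp
  next
    case (Inr i)
    then have "i < k" using hole_lt[OF assms(1) assms(2)] that by simp
    then show ?thesis using Inr assms(3) by simp
  qed
  have "(l, e, s) \<in> set (fill T f ! j) \<longleftrightarrow> (l, e, s) \<in> set (fill T g ! j)" for s
    using pc[of _ s] by (auto simp: nth_fill[OF assms(2)])
  then show ?thesis unfolding inc_def by simp
qed

lemma hw_agree:
  assumes "\<forall>j'<2. inc D' j' l Tl = inc D j' l Tl \<and> inc D' j' l Hd = inc D j' l Hd"
  shows "hw D' j (l, e, s) = hw D j (l, e, s) \<and> gw D' j (l, e, s) = gw D j (l, e, s)"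
  using assms by (simp add: hw_def gw_def all2)

lemma psum_single[simp]: "psum h g [x] = 0" by simp


lemma local_PP:
  fixes n :: nat
  assumes tmpl: "is_template T k" and len: "length T = 2"
    and HC: "\<forall>l \<in> fst ` set (inls (concat T)). \<forall>i<k. \<forall>e s. (l, e, s) \<in> set (f i) \<longleftrightarrow> (l, e, s) \<in> set (g i)"
    and HH: "\<forall>i<k. int n dvd (sum_list (map (hw (fill T g) (cT T i)) (g i)) - sum_list (map (hw (fill T f) (cT T i)) (f i)))"
    and GG: "\<forall>i<k. int n dvd (sum_list (map (gw (fill T g) (cT T i)) (g i)) - sum_list (map (gw (fill T f) (cT T i)) (f i)))"
    and PS: "int n dvd sum_list (map (\<lambda>i. psum (hw (fill T g) (cT T i)) (gw (fill T g) (cT T i)) (g i)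
               - psum (hw (fill T f) (cT T i)) (gw (fill T f) (cT T i)) (f i)) [0..<k])"
  shows "PP n (fill T f) \<longleftrightarrow> PP n (fill T g)"
proof -
  define D where "D = fill T f"
  define D' where "D' = fill T g"
  have inl_agree: "hw D' j c = hw D j c \<and> gw D' j c = gw D j c" if "Inl c \<in> set (T!j')" "j' < 2" for j j' c
  proof -
    obtain l e s where c: "c = (l, e, s)" by (cases c) auto
    have "T!j' \<in> set T" using that(2) len by simp
    then have "Inl c \<in> set (concat T)" using that(1) by auto
    then have "c \<in> set (inls (concat T))" by (rule inls_mem)
    then have "l \<in> fst ` set (inls (concat T))" using c by force
    then have hc: "\<forall>i<k. \<forall>e s. (l, e, s) \<in> set (f i) \<longleftrightarrow> (l, e, s) \<in> set (g i)" using HC by blast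
    have "\<forall>j'<2. inc D' j' l Tl = inc D j' l Tl \<and> inc D' j' l Hd = inc D j' l Hd"
      using inc_agree[OF tmpl _ hc] len unfolding D_def D'_def by auto
    then show ?thesis using hw_agree c by blast
  qed
  define \<Delta> where "\<Delta> = (\<lambda>j a. psum (hw D' j) (gw D' j) (piece g a) - psum (hw D j) (gw D j) (piece f a))"
  have comp: "int n dvd (sum_list (map (hw D' j) (D'!j)) - sum_list (map (hw D j) (D!j))) \<and>
              int n dvd (sum_list (map (gw D' j) (D'!j)) - sum_list (map (gw D j) (D!j))) \<and>
              int n dvd (psum (hw D' j) (gw D' j) (D'!j) - psum (hw D j) (gw D j) (D!j)
                 - sum_list (map (\<Delta> j) (T!j)))"
    if j: "j < 2" for j
  proof -
    have cond: "int n dvd (sum_list (map (hw D' j) (piece g a)) - sum_list (map (hw D j) (piece f a))) \<and>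
                int n dvd (sum_list (map (gw D' j) (piece g a)) - sum_list (map (gw D j) (piece f a)))"
      if a: "a \<in> set (T!j)" for a
    proof (cases a)
      case (Inl c) then show ?thesis using inl_agree[of c j j] a j by simp
    next
      case (Inr i)
      have ik: "i < k" using hole_lt[OF tmpl _ ] a Inr j len by simp
      have "cT T i = j" using cT_eq[OF tmpl len _ j] a Inr by simp
      then show ?thesis using HH GG ik Inr unfolding D_def D'_def by auto
    qed
    have dj: "D!j = concat (map (piece f) (T!j))" "D'!j = concat (map (piece g) (T!j))"
      using nth_fill len j unfolding D_def D'_def by auto
    have s1: "int n dvd (sum_list (map (hw D' j) (D'!j)) - sum_list (map (hw D j) (D!j)))"
      unfolding dj using cond by (intro sums_concat_cong) auto
    have s2: "int n dvd (sum_list (map (gw D' j) (D'!j)) - sum_list (map (gw D j) (D!j)))"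
      unfolding dj using cond by (intro sums_concat_cong) auto
    have s3: "int n dvd (psum (hw D' j) (gw D' j) (D'!j) - psum (hw D j) (gw D j) (D!j)
                 - sum_list (map (\<Delta> j) (T!j)))"
      unfolding dj \<Delta>_def using cond by (intro psum_concat_cong) auto
    show ?thesis using s1 s2 s3 by blast
  qed
  define \<delta> where "\<delta> = (\<lambda>i. psum (hw D' (cT T i)) (gw D' (cT T i)) (g i)
               - psum (hw D (cT T i)) (gw D (cT T i)) (f i))"
  have dsum: "sum_list (map (\<Delta> 0) (T!0)) + sum_list (map (\<Delta> (Suc 0)) (T!Suc 0)) = sum_list (map \<delta> [0..<k])"
  proof (rule sum_holes[OF tmpl len])
    show "\<forall>j<2. \<forall>a\<in>set (T!j). \<Delta> j a = (case a of Inl _ \<Rightarrow> 0 | Inr i \<Rightarrow> \<delta> i)"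
    proof (intro allI impI ballI)
      fix j a assume j: "j < 2" and a: "a \<in> set (T!j)"
      show "\<Delta> j a = (case a of Inl _ \<Rightarrow> 0 | Inr i \<Rightarrow> \<delta> i)"
      proof (cases a)
        case (Inl c) then show ?thesis by (simp add: \<Delta>_def)
      next
        case (Inr i)
        have "cT T i = j" using cT_eq[OF tmpl len _ j] a Inr by simp
        then show ?thesis using Inr by (simp add: \<Delta>_def \<delta>_def)
      qed
    qed
  qed
  have PS': "int n dvd sum_list (map \<delta> [0..<k])" using PS unfolding \<delta>_def D_def D'_def .
  have c0: "int n dvd (psum (hw D' 0) (gw D' 0) (D'!0) - psum (hw D 0) (gw D 0) (D!0)
                 - sum_list (map (\<Delta> 0) (T!0)))" using comp[of 0] by simp
  have c1: "int n dvd (psum (hw D' (Suc 0)) (gw D' (Suc 0)) (D'!Suc 0) - psum (hw D (Suc 0)) (gw D (Suc 0)) (D!Suc 0)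
                 - sum_list (map (\<Delta> (Suc 0)) (T!Suc 0)))" using comp[of "Suc 0"] by simp
  have "Inv D' - Inv D = (psum (hw D' 0) (gw D' 0) (D'!0) - psum (hw D 0) (gw D 0) (D!0)
                 - sum_list (map (\<Delta> 0) (T!0))) + (psum (hw D' (Suc 0)) (gw D' (Suc 0)) (D'!Suc 0) - psum (hw D (Suc 0)) (gw D (Suc 0)) (D!Suc 0)
                 - sum_list (map (\<Delta> (Suc 0)) (T!Suc 0))) + sum_list (map \<delta> [0..<k])"
    unfolding Inv_def dsum[symmetric] by simp
  then have invd: "int n dvd (Inv D' - Inv D)" using c0 c1 PS' by (metis dvd_add)
  have lens: "length D = 2" "length D' = 2" using len unfolding D_def D'_def by auto
  have e0: "int n dvd (Inv D') \<longleftrightarrow> int n dvd (Inv D)" using dvd_diff_iff[OF invd] .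
  have e1: "int n dvd sum_list (map (hw D' 0) (D'!0)) \<longleftrightarrow> int n dvd sum_list (map (hw D 0) (D!0))"
    using comp[of 0] by (intro dvd_diff_iff) simp
  have e2: "int n dvd sum_list (map (gw D' 0) (D'!0)) \<longleftrightarrow> int n dvd sum_list (map (gw D 0) (D!0))"
    using comp[of 0] by (intro dvd_diff_iff) simp
  have e3: "int n dvd sum_list (map (hw D' (Suc 0)) (D'!Suc 0)) \<longleftrightarrow> int n dvd sum_list (map (hw D (Suc 0)) (D!Suc 0))"
    using comp[of "Suc 0"] by (intro dvd_diff_iff) simp
  have e4: "int n dvd sum_list (map (gw D' (Suc 0)) (D'!Suc 0)) \<longleftrightarrow> int n dvd sum_list (map (gw D (Suc 0)) (D!Suc 0))"
    using comp[of "Suc 0"] by (intro dvd_diff_iff) simp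
  have "PP n D \<longleftrightarrow> PP n D'"
    unfolding PP_def all2 using lens e0 e1 e2 e3 e4 by simp
  then show ?thesis unfolding D_def D'_def .
qed


lemma D2: "length D = 2 \<Longrightarrow> concat D = D!0 @ D!1"
  by (subst T2[of D]) auto

lemma filter_pos: "x \<in> set xs \<Longrightarrow> P x \<Longrightarrow> 0 < length (filter P xs)"
  by (induction xs) auto

lemma inc_unique:
  assumes wf: "wf_gauss D" and len: "length D = 2" and i0: "inc D 0 l e" and i1: "inc D 1 l e"
  shows False
proof -
  obtain s0 where s0: "(l, e, s0) \<in> set (D!0)" using i0 unfolding inc_def by blast
  obtain s1 where s1: "(l, e, s1) \<in> set (D!1)" using i1 unfolding inc_def by blast
  let ?P = "\<lambda>c. fst c = l \<and> fst (snd c) = e"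
  have "0 < length (filter ?P (D!0))" using filter_pos[OF s0, of ?P] by simp
  moreover have "0 < length (filter ?P (D!1))" using filter_pos[OF s1, of ?P] by simp
  moreover have "length (filter ?P (concat D)) = length (filter ?P (D!0)) + length (filter ?P (D!1))"
    using D2[OF len] by simp
  moreover have "length (filter ?P (concat D)) \<le> 1" by (rule wf_le1[OF wf])
  ultimately show False by linarith
qed

lemma inc_hole2:
  assumes wf: "wf_gauss (fill T f)" and len: "length T = 2" and h: "Inr i \<in> set (T!j)" and j: "j < 2"
    and m: "(l, e, s) \<in> set (f i)"
  shows "inc (fill T f) 0 l e = (j = 0)" "inc (fill T f) (Suc 0) l e = (j = Suc 0)"
proof -
  have "(l, e, s) \<in> set (fill T f ! j)" using h m j len by (auto simp: nth_fill intro!: bexI[of _ "Inr i"])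
  then have ij: "inc (fill T f) j l e" unfolding inc_def by blast
  have lenD: "length (fill T f) = 2" using len by simp
  have j01: "j = 0 \<or> j = 1" using j by auto
  show "inc (fill T f) 0 l e = (j = 0)"
    using j01 ij inc_unique[OF wf lenD] by auto
  show "inc (fill T f) (Suc 0) l e = (j = Suc 0)"
    using j01 ij inc_unique[OF wf lenD] by auto
qed

lemma not_inls:
  assumes wf: "wf_gauss (fill T g)" and tmpl: "is_template T k" and ik: "i < k" "i' < k"
    and mT: "(l, Tl, s1) \<in> set (g i)" and mH: "(l, Hd, s2) \<in> set (g i')"
  shows "l \<notin> fst ` set (inls (concat T))"
proof
  assume "l \<in> fst ` set (inls (concat T))"
  then obtain e0 s0 where m0: "(l, e0, s0) \<in> set (inls (concat T))" by force
  let ?P = "\<lambda>c. fst c = l \<and> fst (snd c) = e0"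
  obtain ii ss where mm: "(l, e0, ss) \<in> set (g ii)" "ii < k"
    using mT mH ik by (cases e0) auto
  have a: "0 < length (filter ?P (inls (concat T)))" using filter_pos[OF m0, of ?P] by simp
  have b0: "0 < length (filter ?P (g ii))" using filter_pos[OF mm(1), of ?P] by simp
  have "length (filter ?P (g ii)) \<in> set (map (\<lambda>i. length (filter ?P (g i))) [0..<k])"
    using mm(2) by auto
  then have b: "length (filter ?P (g ii)) \<le> sum_list (map (\<lambda>i. length (filter ?P (g i))) [0..<k])"
    by (auto intro: member_le_sum_list)
  have "length (filter ?P (concat (fill T g))) \<le> 1" by (rule wf_le1[OF wf])
  then show False using filter_fill[OF tmpl, of ?P g] a b0 b by linarith
qed

lemma less1: "(\<forall>i<(1::nat). P i) \<longleftrightarrow> P 0" by auto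
lemma all3: "(\<forall>i<(3::nat). P i) \<longleftrightarrow> P 0 \<and> P (Suc 0) \<and> P (Suc (Suc 0))"
  unfolding numeral_3_eq_3 numeral_2_eq_2 by (auto simp: less_Suc_eq)
lemma upt2: "[0..<2] = [0::nat, Suc 0]" by (simp add: numeral_2_eq_2)
lemma upt3: "[0..<3] = [0::nat, Suc 0, Suc (Suc 0)]" by (simp add: numeral_3_eq_3)

lemma R1_PP:
  assumes wfg: "wf_gauss (fill T g)" and tmpl: "is_template T 1" and len: "length T = 2"
    and pic: "R1_pic f g"
  shows "PP n (fill T f) \<longleftrightarrow> PP n (fill T g)"
proof -
  obtain x s where f0: "f 0 = []" and g0: "g 0 = [(x, Tl, s), (x, Hd, s)] \<or> g 0 = [(x, Hd, s), (x, Tl, s)]"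
    using pic unfolding R1_pic_def by blast
  define c where "c = cT T 0"
  have c: "c < 2" "Inr 0 \<in> set (T!c)" using cT_ex[OF tmpl len, of 0] unfolding c_def by auto
  have c01: "c = 0 \<or> c = 1" using c(1) by auto
  have mT: "(x, Tl, s) \<in> set (g 0)" and mH: "(x, Hd, s) \<in> set (g 0)" using g0 by auto
  have ni: "x \<notin> fst ` set (inls (concat T))" using not_inls[OF wfg tmpl _ _ mT mH] by simp
  have HC: "\<forall>l \<in> fst ` set (inls (concat T)). \<forall>i<1. \<forall>e s. (l, e, s) \<in> set (f i) \<longleftrightarrow> (l, e, s) \<in> set (g i)"
  proof (intro ballI allI impI)
    fix l :: nat and i :: nat and e :: endp and s' :: bool assume l: "l \<in> fst ` set (inls (concat T))" and i: "i < 1"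
    have "l \<noteq> x" using l ni by blast
    then show "(l, e, s') \<in> set (f i) \<longleftrightarrow> (l, e, s') \<in> set (g i)" using i f0 g0 by auto
  qed
  note iT = inc_hole2[OF wfg len c(2) c(1) mT]
  note iH = inc_hole2[OF wfg len c(2) c(1) mH]
  show ?thesis
  proof (rule local_PP[OF tmpl len HC])
    show "\<forall>i<1. int n dvd (sum_list (map (hw (fill T g) (cT T i)) (g i)) - sum_list (map (hw (fill T f) (cT T i)) (f i)))"
      unfolding less1 c_def[symmetric] using c01 g0 iT iH
      by (elim disjE) (auto simp: f0 hw_def)
    show "\<forall>i<1. int n dvd (sum_list (map (gw (fill T g) (cT T i)) (g i)) - sum_list (map (gw (fill T f) (cT T i)) (f i)))"
      unfolding less1 c_def[symmetric] using c01 g0 iT iH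
      by (elim disjE) (auto simp: f0 gw_def)
    show "int n dvd sum_list (map (\<lambda>i. psum (hw (fill T g) (cT T i)) (gw (fill T g) (cT T i)) (g i)
               - psum (hw (fill T f) (cT T i)) (gw (fill T f) (cT T i)) (f i)) [0..<1])"
      using c01 g0 iT iH
      by (elim disjE) (auto simp: f0 hw_def gw_def c_def[symmetric])
  qed
qed

lemma OC_PP:
  assumes tmpl: "is_template T 1" and len: "length T = 2" and pic: "OC_pic f g"
  shows "PP n (fill T f) \<longleftrightarrow> PP n (fill T g)"
proof -
  obtain x y s t where f0: "f 0 = [(x, Tl, s), (y, Tl, t)]" and g0: "g 0 = [(y, Tl, t), (x, Tl, s)]"
    using pic unfolding OC_pic_def by blast
  define c where "c = cT T 0"
  have c01: "c = 0 \<or> c = 1" using cT_ex[OF tmpl len, of 0] unfolding c_def by auto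
  have same: "\<forall>i<1. \<forall>e s. (l, e, s) \<in> set (f i) \<longleftrightarrow> (l, e, s) \<in> set (g i)" for l
    using f0 g0 by auto
  then have HC: "\<forall>l \<in> fst ` set (inls (concat T)). \<forall>i<1. \<forall>e s. (l, e, s) \<in> set (f i) \<longleftrightarrow> (l, e, s) \<in> set (g i)"
    by blast
  have ag: "hw (fill T g) j d = hw (fill T f) j d \<and> gw (fill T g) j d = gw (fill T f) j d" for j d
  proof -
    obtain l e s where d: "d = (l, e, s)" by (cases d) auto
    have "\<forall>j'<2. inc (fill T g) j' l Tl = inc (fill T f) j' l Tl \<and> inc (fill T g) j' l Hd = inc (fill T f) j' l Hd"
      using inc_agree[OF tmpl _ same[of l]] len by auto
    then show ?thesis using hw_agree d by blast
  qed
  show ?thesis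
  proof (rule local_PP[OF tmpl len HC])
    show "\<forall>i<1. int n dvd (sum_list (map (hw (fill T g) (cT T i)) (g i)) - sum_list (map (hw (fill T f) (cT T i)) (f i)))"
      unfolding less1 using ag by (simp add: f0 g0)
    show "\<forall>i<1. int n dvd (sum_list (map (gw (fill T g) (cT T i)) (g i)) - sum_list (map (gw (fill T f) (cT T i)) (f i)))"
      unfolding less1 using ag by (simp add: f0 g0)
    show "int n dvd sum_list (map (\<lambda>i. psum (hw (fill T g) (cT T i)) (gw (fill T g) (cT T i)) (g i)
               - psum (hw (fill T f) (cT T i)) (gw (fill T f) (cT T i)) (f i)) [0..<1])"
      using c01 ag
      by (elim disjE) (auto simp: f0 g0 hw_def gw_def c_def[symmetric])
  qed
qed


lemma sum_zero_list: "\<forall>x\<in>set xs. g x = 0 \<Longrightarrow> sum_list (map g xs) = (0::int)"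
  by (induction xs) auto

lemma psum_zero: "(\<forall>x\<in>set xs. h x = 0) \<or> (\<forall>x\<in>set xs. g x = 0) \<Longrightarrow> psum h g xs = 0"
proof (induction xs)
  case Nil then show ?case by simp
next
  case (Cons x xs)
  then have IH: "psum h g xs = 0" by auto
  from Cons.prems show ?case
  proof
    assume "\<forall>x\<in>set (x # xs). h x = 0" then show ?thesis using IH by simp
  next
    assume "\<forall>x\<in>set (x # xs). g x = 0"
    then have "sum_list (map g xs) = 0" by (intro sum_zero_list) auto
    then show ?thesis using IH by simp
  qed
qed

lemma sum_uniform:
  fixes F :: "'a \<Rightarrow> int"
  assumes "\<forall>x\<in>set xs. \<forall>x'\<in>set xs. F x = F x'"
  shows "\<exists>K. sum_list (map F xs) = int (length xs) * K"
proof (cases xs)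
  case Nil then show ?thesis by simp
next
  case (Cons x0 ys)
  have x0: "x0 \<in> set xs" using Cons by simp
  have all: "\<forall>x\<in>set xs. F x = F x0" using assms x0 by blast
  have m: "map F xs = map (\<lambda>_. F x0) xs"
    by (rule map_cong[OF refl]) (use all in blast)
  have "sum_list (map F xs) = int (length xs) * F x0" unfolding m by (simp add: sum_list_triv)
  then show ?thesis by blast
qed

lemma R2_vals:
  assumes c0v: "c0 = 0 \<or> c0 = Suc 0" and c1v: "c1 = 0 \<or> c1 = Suc 0"
    and g0: "g0 = [(x, Tl, s), (y, Tl, \<not> s)] \<or> g0 = [(y, Tl, \<not> s), (x, Tl, s)]"
    and g1: "g1 = [(x, Hd, s), (y, Hd, \<not> s)] \<or> g1 = [(y, Hd, \<not> s), (x, Hd, s)]"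
    and i: "inc D 0 x Tl = (c0 = 0)" "inc D (Suc 0) x Tl = (c0 = Suc 0)"
    "inc D 0 y Tl = (c0 = 0)" "inc D (Suc 0) y Tl = (c0 = Suc 0)"
    "inc D 0 x Hd = (c1 = 0)" "inc D (Suc 0) x Hd = (c1 = Suc 0)"
    "inc D 0 y Hd = (c1 = 0)" "inc D (Suc 0) y Hd = (c1 = Suc 0)"
  shows "sum_list (map (hw D c0) g0) = 0 \<and> sum_list (map (hw D c1) g1) = 0 \<and>
         sum_list (map (gw D c0) g0) = 0 \<and> sum_list (map (gw D c1) g1) = 0 \<and>
         psum (hw D c0) (gw D c0) g0 + psum (hw D c1) (gw D c1) g1 = 0"
  using c0v c1v g0 g1 by (elim disjE; cases s) (simp_all add: hw_def gw_def sg_def i)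

lemma R2_PP:
  assumes wfg: "wf_gauss (fill T g)" and tmpl: "is_template T 2" and len: "length T = 2"
    and pic: "R2_pic f g"
  shows "PP n (fill T f) \<longleftrightarrow> PP n (fill T g)"
proof -
  obtain x y s where f0: "f 0 = []" and f1: "f 1 = []"
    and g0: "g 0 = [(x, Tl, s), (y, Tl, \<not> s)] \<or> g 0 = [(y, Tl, \<not> s), (x, Tl, s)]"
    and g1: "g 1 = [(x, Hd, s), (y, Hd, \<not> s)] \<or> g 1 = [(y, Hd, \<not> s), (x, Hd, s)]"
    using pic unfolding R2_pic_def by blast
  define c0 where "c0 = cT T 0"
  define c1 where "c1 = cT T 1"
  have h0: "c0 < 2" "Inr 0 \<in> set (T!c0)" using cT_ex[OF tmpl len, of 0] unfolding c0_def by auto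
  have h1: "c1 < 2" "Inr 1 \<in> set (T!c1)" using cT_ex[OF tmpl len, of 1] unfolding c1_def by auto
  have c0v: "c0 = 0 \<or> c0 = 1" and c1v: "c1 = 0 \<or> c1 = 1" using h0 h1 by auto
  have mxT: "(x, Tl, s) \<in> set (g 0)" and myT: "(y, Tl, \<not> s) \<in> set (g 0)" using g0 by auto
  have mxH: "(x, Hd, s) \<in> set (g 1)" and myH: "(y, Hd, \<not> s) \<in> set (g 1)" using g1 by auto
  have nx: "x \<notin> fst ` set (inls (concat T))" using not_inls[OF wfg tmpl _ _ mxT mxH] by simp
  have ny: "y \<notin> fst ` set (inls (concat T))" using not_inls[OF wfg tmpl _ _ myT myH] by simp
  have HC: "\<forall>l \<in> fst ` set (inls (concat T)). \<forall>i<2. \<forall>e s. (l, e, s) \<in> set (f i) \<longleftrightarrow> (l, e, s) \<in> set (g i)"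
  proof (intro ballI allI impI)
    fix l :: nat and i :: nat and e :: endp and s' :: bool
    assume l: "l \<in> fst ` set (inls (concat T))" and i: "i < 2"
    have "l \<noteq> x" "l \<noteq> y" using l nx ny by blast+
    moreover have "i = 0 \<or> i = 1" using i by linarith
    ultimately show "(l, e, s') \<in> set (f i) \<longleftrightarrow> (l, e, s') \<in> set (g i)"
      using f0 f1 g0 g1 by (elim disjE) auto
  qed
  note ixT = inc_hole2[OF wfg len h0(2) h0(1) mxT]
  note iyT = inc_hole2[OF wfg len h0(2) h0(1) myT]
  note ixH = inc_hole2[OF wfg len h1(2) h1(1) mxH]
  note iyH = inc_hole2[OF wfg len h1(2) h1(1) myH]
  have c0v': "c0 = 0 \<or> c0 = Suc 0" and c1v': "c1 = 0 \<or> c1 = Suc 0" using c0v c1v by auto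
  have V: "sum_list (map (hw (fill T g) c0) (g 0)) = 0 \<and> sum_list (map (hw (fill T g) c1) (g 1)) = 0 \<and>
         sum_list (map (gw (fill T g) c0) (g 0)) = 0 \<and> sum_list (map (gw (fill T g) c1) (g 1)) = 0 \<and>
         psum (hw (fill T g) c0) (gw (fill T g) c0) (g 0) + psum (hw (fill T g) c1) (gw (fill T g) c1) (g 1) = 0"
    by (rule R2_vals[OF c0v' c1v' g0 g1 ixT iyT ixH iyH])
  have f1': "f (Suc 0) = []" using f1 by simp
  have c1': "cT T (Suc 0) = c1" unfolding c1_def by simp
  have c0': "cT T 0 = c0" unfolding c0_def by simp
  show ?thesis
  proof (rule local_PP[OF tmpl len HC])
    show "\<forall>i<2. int n dvd (sum_list (map (hw (fill T g) (cT T i)) (g i)) - sum_list (map (hw (fill T f) (cT T i)) (f i)))"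
      unfolding all2 c0' c1' f0 f1' using V by simp
    show "\<forall>i<2. int n dvd (sum_list (map (gw (fill T g) (cT T i)) (g i)) - sum_list (map (gw (fill T f) (cT T i)) (f i)))"
      unfolding all2 c0' c1' f0 f1' using V by simp
    show "int n dvd sum_list (map (\<lambda>i. psum (hw (fill T g) (cT T i)) (gw (fill T g) (cT T i)) (g i)
               - psum (hw (fill T f) (cT T i)) (gw (fill T f) (cT T i)) (f i)) [0..<2])"
      unfolding upt2 using V by (simp add: c0' c1' f0 f1')
  qed
qed

lemma Vn_PP:
  assumes wfg: "wf_gauss (fill T g)" and tmpl: "is_template T 2" and len: "length T = 2"
    and pic: "Vn_pic n f g"
  shows "PP n (fill T f) \<longleftrightarrow> PP n (fill T g)"
proof -
  obtain xs s where f0: "f 0 = []" and f1: "f 1 = []" and lx: "length xs = n"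
    and g0: "g 0 = map (\<lambda>x. (x, Tl, s)) xs" and g1: "g 1 = map (\<lambda>x. (x, Hd, s)) xs"
    using pic unfolding Vn_pic_def by blast
  define c0 where "c0 = cT T 0"
  define c1 where "c1 = cT T 1"
  define D' where "D' = fill T g"
  have h0: "c0 < 2" "Inr 0 \<in> set (T!c0)" using cT_ex[OF tmpl len, of 0] unfolding c0_def by auto
  have h1: "c1 < 2" "Inr 1 \<in> set (T!c1)" using cT_ex[OF tmpl len, of 1] unfolding c1_def by auto
  have c0v: "c0 = 0 \<or> c0 = 1" and c1v: "c1 = 0 \<or> c1 = 1" using h0 h1 by auto
  have mT: "(x, Tl, s) \<in> set (g 0)" if "x \<in> set xs" for x using that g0 by auto
  have mH: "(x, Hd, s) \<in> set (g 1)" if "x \<in> set xs" for x using that g1 by auto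
  have nx: "x \<notin> fst ` set (inls (concat T))" if "x \<in> set xs" for x
    using not_inls[OF wfg tmpl _ _ mT[OF that] mH[OF that]] by simp
  have HC: "\<forall>l \<in> fst ` set (inls (concat T)). \<forall>i<2. \<forall>e s. (l, e, s) \<in> set (f i) \<longleftrightarrow> (l, e, s) \<in> set (g i)"
  proof (intro ballI allI impI)
    fix l :: nat and i :: nat and e :: endp and s' :: bool
    assume l: "l \<in> fst ` set (inls (concat T))" and i: "i < 2"
    have "l \<notin> set xs" using l nx by blast
    moreover have "i = 0 \<or> i = 1" using i by linarith
    ultimately show "(l, e, s') \<in> set (f i) \<longleftrightarrow> (l, e, s') \<in> set (g i)"
      using f0 f1 g0 g1 by (elim disjE) auto
  qed
  have iT0: "inc D' 0 x Tl = (c0 = 0)" and iT1: "inc D' 1 x Tl = (c0 = 1)"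
    and iH0: "inc D' 0 x Hd = (c1 = 0)" and iH1: "inc D' 1 x Hd = (c1 = 1)" 
    and iT1': "inc D' (Suc 0) x Tl = (c0 = 1)" and iH1': "inc D' (Suc 0) x Hd = (c1 = 1)" if "x \<in> set xs" for x
    using inc_hole2[OF wfg len h0(2) h0(1) mT[OF that]] inc_hole2[OF wfg len h1(2) h1(1) mH[OF that]]
    unfolding D'_def by auto
  have unif: "hw D' j (x, e, s) = hw D' j (x', e, s) \<and> gw D' j (x, e, s) = gw D' j (x', e, s)"
    if "x \<in> set xs" "x' \<in> set xs" for x x' j e
    using that by (simp add: hw_def gw_def iT0 iT1 iH0 iH1 iT1' iH1')
  have f1': "f (Suc 0) = []" using f1 by simp
  have g1': "g (Suc 0) = map (\<lambda>x. (x, Hd, s)) xs" using g1 by simp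
  have c1': "cT T (Suc 0) = c1" unfolding c1_def by simp
  have sdh: "int n dvd sum_list (map (hw D' j) (map (\<lambda>x. (x, e, s)) xs))" for j e
  proof -
    have u: "\<forall>x\<in>set xs. \<forall>x'\<in>set xs. (hw D' j \<circ> (\<lambda>x. (x, e, s))) x = (hw D' j \<circ> (\<lambda>x. (x, e, s))) x'"
    proof (intro ballI)
      fix x x' assume "x \<in> set xs" "x' \<in> set xs"
      then show "(hw D' j \<circ> (\<lambda>x. (x, e, s))) x = (hw D' j \<circ> (\<lambda>x. (x, e, s))) x'"
        using unif[of x x' j e] by simp
    qed
    obtain K where "sum_list (map (hw D' j \<circ> (\<lambda>x. (x, e, s))) xs) = int (length xs) * K"
      using sum_uniform[OF u] by blast
    then show ?thesis using lx by simp
  qed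
  have sdg: "int n dvd sum_list (map (gw D' j) (map (\<lambda>x. (x, e, s)) xs))" for j e
  proof -
    have u: "\<forall>x\<in>set xs. \<forall>x'\<in>set xs. (gw D' j \<circ> (\<lambda>x. (x, e, s))) x = (gw D' j \<circ> (\<lambda>x. (x, e, s))) x'"
    proof (intro ballI)
      fix x x' assume "x \<in> set xs" "x' \<in> set xs"
      then show "(gw D' j \<circ> (\<lambda>x. (x, e, s))) x = (gw D' j \<circ> (\<lambda>x. (x, e, s))) x'"
        using unif[of x x' j e] by simp
    qed
    obtain K where "sum_list (map (gw D' j \<circ> (\<lambda>x. (x, e, s))) xs) = int (length xs) * K"
      using sum_uniform[OF u] by blast
    then show ?thesis using lx by simp
  qed
  show ?thesis
  proof (rule local_PP[OF tmpl len HC])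
    show "\<forall>i<2. int n dvd (sum_list (map (hw (fill T g) (cT T i)) (g i)) - sum_list (map (hw (fill T f) (cT T i)) (f i)))"
      unfolding all2 D'_def[symmetric] using sdh by (simp add: f0 f1 g0 g1 f1' g1')
    show "\<forall>i<2. int n dvd (sum_list (map (gw (fill T g) (cT T i)) (g i)) - sum_list (map (gw (fill T f) (cT T i)) (f i)))"
      unfolding all2 D'_def[symmetric] using sdg by (simp add: f0 f1 g0 g1 f1' g1')
    have p0: "psum (hw D' c0) (gw D' c0) (g 0) = 0"
      unfolding g0 using c0v by (intro psum_zero) (auto simp: hw_def gw_def)
    have p1: "psum (hw D' c1) (gw D' c1) (g 1) = 0"
      unfolding g1 using c0v c1v by (intro psum_zero) (auto simp: hw_def gw_def iT0 iT1 iT1')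
    show "int n dvd sum_list (map (\<lambda>i. psum (hw (fill T g) (cT T i)) (gw (fill T g) (cT T i)) (g i)
               - psum (hw (fill T f) (cT T i)) (gw (fill T f) (cT T i)) (f i)) [0..<2])"
      unfolding upt2 D'_def[symmetric] using p0 p1 by (simp add: f0 f1 f1' c0_def[symmetric] c1_def[symmetric] c1' g1')
  qed
qed


lemma R3_vals:
  assumes c0v: "c0 = 0 \<or> c0 = Suc 0" and c1v: "c1 = 0 \<or> c1 = Suc 0" and c2v: "c2 = 0 \<or> c2 = Suc 0"
    and f: "f0 = r3_side lam x y z a b c 0" "f1 = r3_side lam x y z a b c (Suc 0)"
           "f2 = r3_side lam x y z a b c (Suc (Suc 0))"
    and g: "g0 = r3_side (\<not> lam) x y z a b c 0" "g1 = r3_side (\<not> lam) x y z a b c (Suc 0)"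
           "g2 = r3_side (\<not> lam) x y z a b c (Suc (Suc 0))"
    and i: "inc D 0 x Tl = (c0 = 0)" "inc D (Suc 0) x Tl = (c0 = Suc 0)"
      "inc D 0 y Tl = (c0 = 0)" "inc D (Suc 0) y Tl = (c0 = Suc 0)"
      "inc D 0 x Hd = (c1 = 0)" "inc D (Suc 0) x Hd = (c1 = Suc 0)"
      "inc D 0 z Tl = (c1 = 0)" "inc D (Suc 0) z Tl = (c1 = Suc 0)"
      "inc D 0 y Hd = (c2 = 0)" "inc D (Suc 0) y Hd = (c2 = Suc 0)"
      "inc D 0 z Hd = (c2 = 0)" "inc D (Suc 0) z Hd = (c2 = Suc 0)"
    and i': "inc D' 0 x Tl = (c0 = 0)" "inc D' (Suc 0) x Tl = (c0 = Suc 0)"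
      "inc D' 0 y Tl = (c0 = 0)" "inc D' (Suc 0) y Tl = (c0 = Suc 0)"
      "inc D' 0 x Hd = (c1 = 0)" "inc D' (Suc 0) x Hd = (c1 = Suc 0)"
      "inc D' 0 z Tl = (c1 = 0)" "inc D' (Suc 0) z Tl = (c1 = Suc 0)"
      "inc D' 0 y Hd = (c2 = 0)" "inc D' (Suc 0) y Hd = (c2 = Suc 0)"
      "inc D' 0 z Hd = (c2 = 0)" "inc D' (Suc 0) z Hd = (c2 = Suc 0)"
  shows "sum_list (map (hw D' c0) g0) = sum_list (map (hw D c0) f0) \<and>
         sum_list (map (hw D' c1) g1) = sum_list (map (hw D c1) f1) \<and>
         sum_list (map (hw D' c2) g2) = sum_list (map (hw D c2) f2) \<and>
         sum_list (map (gw D' c0) g0) = sum_list (map (gw D c0) f0) \<and>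
         sum_list (map (gw D' c1) g1) = sum_list (map (gw D c1) f1) \<and>
         sum_list (map (gw D' c2) g2) = sum_list (map (gw D c2) f2) \<and>
         (psum (hw D' c0) (gw D' c0) g0 - psum (hw D c0) (gw D c0) f0) +
         ((psum (hw D' c1) (gw D' c1) g1 - psum (hw D c1) (gw D c1) f1) +
         (psum (hw D' c2) (gw D' c2) g2 - psum (hw D c2) (gw D c2) f2)) = 0"
  unfolding f g using c0v c1v c2v
  by (elim disjE; cases lam; cases a; cases b; cases c) (simp_all add: hw_def gw_def sg_def i i' r3_side_def)

lemma R3_PP:
  assumes wff: "wf_gauss (fill T f)" and wfg: "wf_gauss (fill T g)" and tmpl: "is_template T 3"
    and len: "length T = 2" and pic: "R3_pic f g"
  shows "PP n (fill T f) \<longleftrightarrow> PP n (fill T g)"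
proof -
  obtain lam x y z a b c where fg: "\<forall>i<3. f i = r3_side lam x y z a b c i \<and> g i = r3_side (\<not> lam) x y z a b c i"
    using pic unfolding R3_pic_def by blast
  have f0: "f 0 = r3_side lam x y z a b c 0" and f1: "f (Suc 0) = r3_side lam x y z a b c (Suc 0)"
    and f2: "f (Suc (Suc 0)) = r3_side lam x y z a b c (Suc (Suc 0))"
    and g0: "g 0 = r3_side (\<not> lam) x y z a b c 0" and g1: "g (Suc 0) = r3_side (\<not> lam) x y z a b c (Suc 0)"
    and g2: "g (Suc (Suc 0)) = r3_side (\<not> lam) x y z a b c (Suc (Suc 0))"
    using fg unfolding all3 by auto
  define c0 where "c0 = cT T 0"
  define c1 where "c1 = cT T (Suc 0)"
  define c2 where "c2 = cT T (Suc (Suc 0))"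
  have h0: "c0 < 2" "Inr 0 \<in> set (T!c0)" using cT_ex[OF tmpl len, of 0] unfolding c0_def by auto
  have h1: "c1 < 2" "Inr (Suc 0) \<in> set (T!c1)" using cT_ex[OF tmpl len, of "Suc 0"] unfolding c1_def by auto
  have h2: "c2 < 2" "Inr (Suc (Suc 0)) \<in> set (T!c2)" using cT_ex[OF tmpl len, of "Suc (Suc 0)"] unfolding c2_def by auto
  have c0v: "c0 = 0 \<or> c0 = Suc 0" and c1v: "c1 = 0 \<or> c1 = Suc 0" and c2v: "c2 = 0 \<or> c2 = Suc 0"
    using h0 h1 h2 by auto
  have mf: "(x, Tl, a) \<in> set (f 0)" "(y, Tl, b) \<in> set (f 0)"
     "(x, Hd, a) \<in> set (f (Suc 0))" "(z, Tl, c) \<in> set (f (Suc 0))"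
     "(y, Hd, b) \<in> set (f (Suc (Suc 0)))" "(z, Hd, c) \<in> set (f (Suc (Suc 0)))"
    unfolding f0 f1 f2 by (simp_all add: r3_side_def Let_def)
  have mg: "(x, Tl, a) \<in> set (g 0)" "(y, Tl, b) \<in> set (g 0)"
     "(x, Hd, a) \<in> set (g (Suc 0))" "(z, Tl, c) \<in> set (g (Suc 0))"
     "(y, Hd, b) \<in> set (g (Suc (Suc 0)))" "(z, Hd, c) \<in> set (g (Suc (Suc 0)))"
    unfolding g0 g1 g2 by (simp_all add: r3_side_def Let_def)
  have nx: "x \<notin> fst ` set (inls (concat T))" using not_inls[OF wfg tmpl _ _ mg(1) mg(3)] by simp
  have ny: "y \<notin> fst ` set (inls (concat T))" using not_inls[OF wfg tmpl _ _ mg(2) mg(5)] by simp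
  have nz: "z \<notin> fst ` set (inls (concat T))" using not_inls[OF wfg tmpl _ _ mg(4) mg(6)] by simp
  have labs: "fst ` set (f i) \<subseteq> {x, y, z} \<and> fst ` set (g i) \<subseteq> {x, y, z}" if "i < 3" for i
  proof -
    have "i = 0 \<or> i = Suc 0 \<or> i = Suc (Suc 0)" using that by linarith
    then show ?thesis
      by (elim disjE) (auto simp: f0 f1 f2 g0 g1 g2 r3_side_def Let_def)
  qed
  have HC: "\<forall>l \<in> fst ` set (inls (concat T)). \<forall>i<3. \<forall>e s. (l, e, s) \<in> set (f i) \<longleftrightarrow> (l, e, s) \<in> set (g i)"
  proof (intro ballI allI impI)
    fix l :: nat and i :: nat and e :: endp and s' :: bool
    assume l: "l \<in> fst ` set (inls (concat T))" and i: "i < 3"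
    have "l \<notin> {x, y, z}" using l nx ny nz by blast
    then have "l \<notin> fst ` set (f i)" "l \<notin> fst ` set (g i)" using labs[OF i] by blast+
    then show "(l, e, s') \<in> set (f i) \<longleftrightarrow> (l, e, s') \<in> set (g i)" by force
  qed
  note I0 = inc_hole2[OF wff len h0(2) h0(1) mf(1)] inc_hole2[OF wff len h0(2) h0(1) mf(2)]
    inc_hole2[OF wff len h1(2) h1(1) mf(3)] inc_hole2[OF wff len h1(2) h1(1) mf(4)]
    inc_hole2[OF wff len h2(2) h2(1) mf(5)] inc_hole2[OF wff len h2(2) h2(1) mf(6)]
  note I1 = inc_hole2[OF wfg len h0(2) h0(1) mg(1)] inc_hole2[OF wfg len h0(2) h0(1) mg(2)]
    inc_hole2[OF wfg len h1(2) h1(1) mg(3)] inc_hole2[OF wfg len h1(2) h1(1) mg(4)]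
    inc_hole2[OF wfg len h2(2) h2(1) mg(5)] inc_hole2[OF wfg len h2(2) h2(1) mg(6)]
  have V: "sum_list (map (hw (fill T g) c0) (g 0)) = sum_list (map (hw (fill T f) c0) (f 0)) \<and>
         sum_list (map (hw (fill T g) c1) (g (Suc 0))) = sum_list (map (hw (fill T f) c1) (f (Suc 0))) \<and>
         sum_list (map (hw (fill T g) c2) (g (Suc (Suc 0)))) = sum_list (map (hw (fill T f) c2) (f (Suc (Suc 0)))) \<and>
         sum_list (map (gw (fill T g) c0) (g 0)) = sum_list (map (gw (fill T f) c0) (f 0)) \<and>
         sum_list (map (gw (fill T g) c1) (g (Suc 0))) = sum_list (map (gw (fill T f) c1) (f (Suc 0))) \<and>
         sum_list (map (gw (fill T g) c2) (g (Suc (Suc 0)))) = sum_list (map (gw (fill T f) c2) (f (Suc (Suc 0)))) \<and>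
         (psum (hw (fill T g) c0) (gw (fill T g) c0) (g 0) - psum (hw (fill T f) c0) (gw (fill T f) c0) (f 0)) +
         ((psum (hw (fill T g) c1) (gw (fill T g) c1) (g (Suc 0)) - psum (hw (fill T f) c1) (gw (fill T f) c1) (f (Suc 0))) +
         (psum (hw (fill T g) c2) (gw (fill T g) c2) (g (Suc (Suc 0))) - psum (hw (fill T f) c2) (gw (fill T f) c2) (f (Suc (Suc 0))))) = 0"
    by (rule R3_vals[OF c0v c1v c2v f0 f1 f2 g0 g1 g2 I0 I1])
  have c0': "cT T 0 = c0" and c1': "cT T (Suc 0) = c1" and c2': "cT T (Suc (Suc 0)) = c2"
    unfolding c0_def c1_def c2_def by simp_all
  show ?thesis
  proof (rule local_PP[OF tmpl len HC])
    show "\<forall>i<3. int n dvd (sum_list (map (hw (fill T g) (cT T i)) (g i)) - sum_list (map (hw (fill T f) (cT T i)) (f i)))"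
      unfolding all3 c0' c1' c2' using V by simp
    show "\<forall>i<3. int n dvd (sum_list (map (gw (fill T g) (cT T i)) (g i)) - sum_list (map (gw (fill T f) (cT T i)) (f i)))"
      unfolding all3 c0' c1' c2' using V by simp
    show "int n dvd sum_list (map (\<lambda>i. psum (hw (fill T g) (cT T i)) (gw (fill T g) (cT T i)) (g i)
               - psum (hw (fill T f) (cT T i)) (gw (fill T f) (cT T i)) (f i)) [0..<3])"
      unfolding upt3 using V by (simp add: c0' c1' c2')
  qed
qed


lemma psum_rotate1:
  "psum h g (rotate1 xs) = psum h g xs +
     (case xs of [] \<Rightarrow> 0 | x # _ \<Rightarrow> sum_list (map h xs) * g x - h x * sum_list (map g xs))"
proof (cases xs)
  case Nil then show ?thesis by simp
next
  case (Cons x ys)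
  then show ?thesis by (simp add: psum_append algebra_simps)
qed

lemma sum_rotate1: "sum_list (map (h :: 'a \<Rightarrow> int) (rotate1 xs)) = sum_list (map h xs)"
  by (rule sum_list_perm) (cases xs, auto)

lemma iso_len: "iso_step X Y \<Longrightarrow> length Y = length X"
  unfolding iso_step_def by auto

lemma rot_PP:
  assumes len: "length X = 2" and i: "i < length X" and Y: "Y = X[i := rotate1 (X!i)]"
  shows "PP n X \<longleftrightarrow> PP n Y"
proof -
  have nth: "Y ! j = (if j = i then rotate1 (X!j) else X!j)" if "j < 2" for j
    using that len i Y by simp
  have incs: "inc Y j l e = inc X j l e" if "j < 2" for j l e
    unfolding inc_def using nth[OF that] by simp
  have hwY: "hw Y = hw X" and gwY: "gw Y = gw X"
    by (auto simp: fun_eq_iff hw_def gw_def incs)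
  have sums: "sum_list (map (hw X j) (Y!j)) = sum_list (map (hw X j) (X!j)) \<and>
              sum_list (map (gw X j) (Y!j)) = sum_list (map (gw X j) (X!j))" if "j < 2" for j
    using nth[OF that] by (simp add: sum_rotate1)
  have lenY: "length Y = 2" using len Y by simp
  have i01: "i = 0 \<or> i = Suc 0" using i len by auto
  have invd: "int n dvd (Inv Y - Inv X)"
    if d1: "int n dvd sum_list (map (hw X i) (X!i))" and d2: "int n dvd sum_list (map (gw X i) (X!i))"
  proof -
    have "Inv Y - Inv X = psum (hw X i) (gw X i) (rotate1 (X!i)) - psum (hw X i) (gw X i) (X!i)"
      using i01 nth unfolding Inv_def hwY gwY by (elim disjE) auto
    also have "\<dots> = (case X!i of [] \<Rightarrow> 0 | x # _ \<Rightarrow> sum_list (map (hw X i) (X!i)) * gw X i x - hw X i x * sum_list (map (gw X i) (X!i)))"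
      by (simp add: psum_rotate1)
    finally show ?thesis using d1 d2 by (auto split: list.splits)
  qed
  show ?thesis
  proof
    assume P: "PP n X"
    then have d: "int n dvd sum_list (map (hw X i) (X!i))" "int n dvd sum_list (map (gw X i) (X!i))"
      using i len unfolding PP_def by auto
    show "PP n Y" using P sums invd[OF d] lenY unfolding PP_def hwY gwY
      by (metis (no_types, lifting) dvd_diff_iff)
  next
    assume P: "PP n Y"
    then have d: "int n dvd sum_list (map (hw X i) (X!i))" "int n dvd sum_list (map (gw X i) (X!i))"
      using i len sums unfolding PP_def hwY gwY by auto
    show "PP n X" using P sums invd[OF d] len unfolding PP_def hwY gwY
      by (metis (no_types, lifting) dvd_diff_iff)
  qed
qed

lemma psum_map: "psum h g (map r xs) = psum (h \<circ> r) (g \<circ> r) xs"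
  by (induction xs) (auto simp: o_def)

lemma ren_PP:
  assumes len: "length X = 2" and inj: "inj \<pi>" and Y: "Y = map (map (\<lambda>(l, e, s). (\<pi> l, e, s))) X"
  shows "PP n X \<longleftrightarrow> PP n Y"
proof -
  define rn :: "letter \<Rightarrow> letter" where "rn = (\<lambda>(l, e, s). (\<pi> l, e, s))"
  have rn: "rn (l, e, s) = (\<pi> l, e, s)" for l e s by (simp add: rn_def)
  have nth: "Y ! j = map rn (X!j)" if "j < 2" for j
    using that len Y by (simp add: rn_def)
  have incs: "inc Y j (\<pi> l) e = inc X j l e" if "j < 2" for j l e
  proof -
    have "(\<pi> l, e, s) \<in> set (map rn (X!j)) \<longleftrightarrow> (l, e, s) \<in> set (X!j)" for s
    proof
      assume "(\<pi> l, e, s) \<in> set (map rn (X!j))"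
      then obtain c where c: "c \<in> set (X!j)" "rn c = (\<pi> l, e, s)" by auto
      obtain l' e' s' where "c = (l', e', s')" by (cases c) auto
      then show "(l, e, s) \<in> set (X!j)" using c inj by (auto simp: rn dest: injD)
    next
      assume m: "(l, e, s) \<in> set (X!j)"
      show "(\<pi> l, e, s) \<in> set (map rn (X!j))" unfolding set_map
        by (rule image_eqI[where x="(l, e, s)"]) (simp_all add: rn m)
    qed
    then show ?thesis unfolding inc_def nth[OF that] by simp
  qed
  have hw: "hw Y j \<circ> rn = hw X j" and gw: "gw Y j \<circ> rn = gw X j" for j
    by (auto simp: fun_eq_iff rn hw_def gw_def incs)
  have lenY: "length Y = 2" using len Y by simp
  have e: "sum_list (map (hw Y j) (Y!j)) = sum_list (map (hw X j) (X!j)) \<and>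
           sum_list (map (gw Y j) (Y!j)) = sum_list (map (gw X j) (X!j)) \<and>
           psum (hw Y j) (gw Y j) (Y!j) = psum (hw X j) (gw X j) (X!j)" if "j < 2" for j
    unfolding nth[OF that] psum_map map_map hw gw by simp
  have "Inv Y = Inv X" unfolding Inv_def using e[of 0] e[of "Suc 0"] by simp
  then show ?thesis unfolding PP_def all2 using e[of 0] e[of "Suc 0"] len lenY by simp
qed

lemma iso_PP:
  assumes "iso_step X Y" "length X = 2"
  shows "PP n X \<longleftrightarrow> PP n Y"
proof -
  from assms(1) have "(\<exists>i < length X. Y = X[i := rotate1 (X ! i)]) \<or>
      (\<exists>\<pi>. inj \<pi> \<and> Y = map (map (\<lambda>(l, e, s). (\<pi> l, e, s))) X)"
    unfolding iso_step_def by blast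
  then show ?thesis
  proof
    assume "\<exists>i < length X. Y = X[i := rotate1 (X ! i)]"
    then obtain i where i: "i < length X" and Y: "Y = X[i := rotate1 (X ! i)]" by blast
    show ?thesis by (rule rot_PP[OF assms(2) i Y])
  next
    assume "\<exists>\<pi>. inj \<pi> \<and> Y = map (map (\<lambda>(l, e, s). (\<pi> l, e, s))) X"
    then obtain \<pi> where p: "inj \<pi>" and Y: "Y = map (map (\<lambda>(l, e, s). (\<pi> l, e, s))) X" by blast
    show ?thesis by (rule ren_PP[OF assms(2) p Y])
  qed
qed

lemma local_PP_step:
  assumes lm: "local_move k M E E'" and len: "length E = 2"
    and H: "\<And>T f g. wf_gauss (fill T f) \<Longrightarrow> wf_gauss (fill T g) \<Longrightarrow> is_template T k \<Longrightarrow>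
              length T = 2 \<Longrightarrow> M f g \<Longrightarrow> PP n (fill T f) \<longleftrightarrow> PP n (fill T g)"
  shows "PP n E \<longleftrightarrow> PP n E'"
proof -
  obtain T f g where w: "wf_gauss E" "wf_gauss E'" and t: "is_template T k"
    and E: "E = fill T f" and E': "E' = fill T g" and m: "M f g \<or> M g f"
    using lm unfolding local_move_def by blast
  have lT: "length T = 2" using len E by simp
  from m show ?thesis
  proof
    assume "M f g" then show ?thesis using H[of T f g] w t lT E E' by simp
  next
    assume "M g f" then show ?thesis using H[of T g f] w t lT E E' by simp
  qed
qed

lemma step_PP:
  assumes st: "welded_step E E' \<or> Vn_step n E E'" and P: "PP n E"
  shows "PP n E'"
proof -
  have len: "length E = 2" using P unfolding PP_def by simp
  from st have "PP n E \<longleftrightarrow> PP n E'"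
    unfolding welded_step_def Vn_step_def
  proof (elim disjE)
    assume "iso_step E E'" then show ?thesis using iso_PP len by blast
  next
    assume a: "iso_step E' E"
    then have "length E' = 2" using iso_len len by simp
    then show ?thesis using iso_PP[OF a] by simp
  next
    assume "local_move 1 R1_pic E E'"
    then show ?thesis using len by (rule local_PP_step) (rule R1_PP, simp_all)
  next
    assume "local_move 2 R2_pic E E'"
    then show ?thesis using len by (rule local_PP_step) (rule R2_PP, simp_all)
  next
    assume "local_move 3 R3_pic E E'"
    then show ?thesis using len by (rule local_PP_step) (rule R3_PP, simp_all)
  next
    assume "local_move 1 OC_pic E E'"
    then show ?thesis using len by (rule local_PP_step) (rule OC_PP, simp_all)
  next
    assume "local_move 2 (Vn_pic n) E E'"
    then show ?thesis using len by (rule local_PP_step) (rule Vn_PP, simp_all)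
  qed
  then show ?thesis using P by simp
qed


definition D0 :: gauss where
  "D0 = [[(0, Tl, True), (0, Hd, True), (1, Hd, True), (2, Hd, False)], [(1, Tl, True), (2, Tl, False)]]"

definition D0' :: gauss where
  "D0' = [[(0, Tl, True), (1, Hd, True), (0, Hd, True), (2, Hd, False)], [(1, Tl, True), (2, Tl, False)]]"

lemma wf_intro:
  "(\<And>l. filter (\<lambda>c. fst c = l) (concat D) = [] \<or>
      (\<exists>s. mset (filter (\<lambda>c. fst c = l) (concat D)) = {#(l, Tl, s), (l, Hd, s)#})) \<Longrightarrow> wf_gauss D"
  unfolding wf_gauss_def Let_def by blast

lemma wf_D0: "wf_gauss D0"
proof (rule wf_intro)
  fix l :: nat
  have "l = 0 \<or> l = 1 \<or> l = 2 \<or> (l \<noteq> 0 \<and> l \<noteq> 1 \<and> l \<noteq> 2)" by auto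
  then show "filter (\<lambda>c. fst c = l) (concat D0) = [] \<or>
      (\<exists>s. mset (filter (\<lambda>c. fst c = l) (concat D0)) = {#(l, Tl, s), (l, Hd, s)#})"
  proof (elim disjE)
    assume "l = 0" then show ?thesis by (intro disjI2 exI[of _ True]) (simp add: D0_def)
  next
    assume "l = 1" then show ?thesis by (intro disjI2 exI[of _ True]) (simp add: D0_def add_mset_commute)
  next
    assume "l = 2" then show ?thesis by (intro disjI2 exI[of _ False]) (simp add: D0_def add_mset_commute)
  next
    assume "l \<noteq> 0 \<and> l \<noteq> 1 \<and> l \<noteq> 2" then show ?thesis by (intro disjI1) (auto simp: D0_def)
  qed
qed

lemma wf_D0': "wf_gauss D0'"
proof (rule wf_intro)
  fix l :: nat
  have "l = 0 \<or> l = 1 \<or> l = 2 \<or> (l \<noteq> 0 \<and> l \<noteq> 1 \<and> l \<noteq> 2)" by auto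
  then show "filter (\<lambda>c. fst c = l) (concat D0') = [] \<or>
      (\<exists>s. mset (filter (\<lambda>c. fst c = l) (concat D0')) = {#(l, Tl, s), (l, Hd, s)#})"
  proof (elim disjE)
    assume "l = 0" then show ?thesis by (intro disjI2 exI[of _ True]) (simp add: D0'_def)
  next
    assume "l = 1" then show ?thesis by (intro disjI2 exI[of _ True]) (simp add: D0'_def add_mset_commute)
  next
    assume "l = 2" then show ?thesis by (intro disjI2 exI[of _ False]) (simp add: D0'_def add_mset_commute)
  next
    assume "l \<noteq> 0 \<and> l \<noteq> 1 \<and> l \<noteq> 2" then show ?thesis by (intro disjI1) (auto simp: D0'_def)
  qed
qed

lemma UC_D0: "UC_step D0 D0'"
  unfolding UC_step_def local_move_def
proof (intro conjI wf_D0 wf_D0')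
  define T :: template where
    "T = [[Inl (0, Tl, True), Inr 0, Inl (2, Hd, False)], [Inl (1, Tl, True), Inl (2, Tl, False)]]"
  define f :: "nat \<Rightarrow> letter list" where "f = (\<lambda>_. [(0, Hd, True), (1, Hd, True)])"
  define g :: "nat \<Rightarrow> letter list" where "g = (\<lambda>_. [(1, Hd, True), (0, Hd, True)])"
  have "is_template T 1" by (simp add: is_template_def holes_def T_def)
  moreover have "D0 = fill T f" by (simp add: fill_def T_def f_def D0_def)
  moreover have "D0' = fill T g" by (simp add: fill_def T_def g_def D0'_def)
  moreover have "UC_pic f g" unfolding UC_pic_def f_def g_def by blast
  ultimately show "\<exists>T f g. is_template T 1 \<and> D0 = fill T f \<and> D0' = fill T g \<and> (UC_pic f g \<or> UC_pic g f)"
    by blast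
qed

lemma PP_D0: "PP n D0"
  unfolding PP_def Inv_def all2 by (simp add: D0_def hw_def gw_def inc_def sg_def ex_bool_eq all_bool_eq)

lemma Inv_D0': "Inv D0' = -1"
  unfolding Inv_def by (simp add: D0'_def hw_def gw_def inc_def sg_def ex_bool_eq all_bool_eq)

lemma not_PP_D0': "PP n D0' \<Longrightarrow> n = 1"
proof -
  assume "PP n D0'"
  then have "int n dvd -1" using Inv_D0' unfolding PP_def by simp
  then have "int n dvd 1" by simp
  then have "n dvd 1" by (metis int_dvd_int_iff of_nat_1)
  then show "n = 1" by simp
qed

theorem corollary5p3:
  fixes n :: nat
  assumes "0 < n"
  shows "(\<forall>D D'. UC_step D D' \<longrightarrow> (\<lambda>E E'. welded_step E E' \<or> Vn_step n E E')\<^sup>*\<^sup>* D D')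
         \<longleftrightarrow> n = 1"
proof
  assume H: "\<forall>D D'. UC_step D D' \<longrightarrow> (\<lambda>E E'. welded_step E E' \<or> Vn_step n E E')\<^sup>*\<^sup>* D D'"
  then have r: "(\<lambda>E E'. welded_step E E' \<or> Vn_step n E E')\<^sup>*\<^sup>* D0 D0'" using UC_D0 by blast
  have "PP n D0'" using r
  proof (induction rule: rtranclp_induct)
    case base then show ?case by (rule PP_D0)
  next
    case (step y z) then show ?case using step_PP by blast
  qed
  then show "n = 1" by (rule not_PP_D0')
next
  assume "n = 1"
  then show "\<forall>D D'. UC_step D D' \<longrightarrow> (\<lambda>E E'. welded_step E E' \<or> Vn_step n E E')\<^sup>*\<^sup>* D D'"
    using n1_dir unfolding RR_def by blast
qed


end
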